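(* Let $\mathcal{P}\subset\mathbb{R}^3$ be a polyhedron with radius $1$ and let $P_1,P_2,P_3,Q_1,Q_2,Q_3\in\mathcal{P}$ (not necessarily distinct) such that the triples $(P_1,P_2,P_3)$ and $(Q_1,Q_2,Q_3)$ are congruent. Let $\varepsilon>0$ and $\bar\theta_1,\bar\varphi_1,\bar\theta_2,\bar\varphi_2,\bar\alpha\in\mathbb{R}$; set $\overline{X_k}=X(\bar\theta_k,\bar\varphi_k)$, $\overline{M_k}=M(\bar\theta_k,\bar\varphi_k)$ for $k=1,2$. Assume: (A) there exist $\sigma_P,\sigma_Q\in\{0,1\}$ with $(-1)^{\sigma_P}\langle\overline{X_1},P_i\rangle>\sqrt2\varepsilon$ and $(-1)^{\sigma_Q}\langle\overline{X_2},Q_i\rangle>\sqrt2\varepsilon$ for $i=1,2,3$; (S) $P_1,P_2,P_3$ are $\varepsilon$-spanning for $(\bar\theta_1,\bar\varphi_1)$ and $Q_1,Q_2,Q_3$ are $\varepsilon$-spanning for $(\bar\theta_2,\bar\varphi_2)$; (B) there are $r>0$ with $\min_{i=1,2,3}\|\overline{M_2}Q_i\|>r+\sqrt2\varepsilon$ and $\delta\in\mathbb{R}$ with $\delta\ge\max_{i=1,2,3}\|R(\bar\alpha)\overline{M_1}P_i-\overline{M_2}Q_i\|/2$, such that for all $i=1,2,3$ and every $Q_j\in\mathcal{P}\setminus\{Q_i\}$, \[ \frac{\langle\overline{M_2}Q_i,\overline{M_2}(Q_i-Q_j)\rangle-2\varepsilon\|Q_i-Q_j\|(\sqrt2+\varepsilon)}{(\|\overline{M_2}Q_i\|+\sqrt2\varepsilon)(\|\overline{M_2}(Q_i-Q_j)\|+2\sqrt2\varepsilon)}>\frac{\sqrt5\varepsilon+\delta}{r}.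 \] Then there is no $(\theta_1,\varphi_1,\theta_2,\varphi_2,\alpha)$ with $|\theta_k-\bar\theta_k|,|\varphi_k-\bar\varphi_k|,|\alpha-\bar\alpha|\le\varepsilon$ ($k=1,2$) such that $R(\alpha)M(\theta_1,\varphi_1)\mathcal{P}\subset\operatorname{int}\operatorname{conv}(M(\theta_2,\varphi_2)\mathcal{P})$.
   Context: $R(\alpha)=\begin{pmatrix}\cos\alpha&-\sin\alpha\\ \sin\alpha&\cos\alpha\end{pmatrix}$; $X(\theta,\varphi)=(\cos\theta\sin\varphi,\sin\theta\sin\varphi,\cos\varphi)^t$; $M(\theta,\varphi)=\begin{pmatrix}-\sin\theta&\cos\theta&0\\ -\cos\theta\cos\varphi&-\sin\theta\cos\varphi&\sin\varphi\end{pmatrix}$. A polyhedron is a finite non-degenerate set of points of $\mathbb{R}^3$ in convex position; radius $1$ means all its points have norm $\le1$ with equality for some. Triples $(P_1,P_2,P_3)$, $(Q_1,Q_2,Q_3)$ in $\mathbb{R}^3$ are congruent if there is an orthonormal $L\in\mathbb{R}^{3\times3}$ with $P_i=LQ_i$ for $i=1,2,3$. Given $\theta,\varphi\in\mathbb{R}$, $\varepsilon>0$ and $M=M(\theta,\varphi)$, points $P_1,P_2,P_3\in\mathbb{R}^3$ with norms $\le1$ are $\varepsilon$-spanning for $(\theta,\varphi)$ if $\langle R(\pi/2)MP_1,MP_2\rangle$, $\langle R(\pi/2)MP_2,MP_3\rangle$, $\langle R(\pi/2)MP_3,MP_1\rangle$ are all $>2\varepsilon(\sqrt2+\varepsilon)$.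 Matrices act on point sets elementwise; norms of matrices are operator norms. *)

theory Defs
  imports "HOL-Analysis.Analysis"
begin

definition rotR :: "real \<Rightarrow> real^2^2" where
  "rotR a = vector [vector [cos a, - sin a], vector [sin a, cos a]]"

definition Xvec :: "real \<Rightarrow> real \<Rightarrow> real^3" where
  "Xvec th ph = vector [cos th * sin ph, sin th * sin ph, cos ph]"

definition Mmat :: "real \<Rightarrow> real \<Rightarrow> real^3^2" where
  "Mmat th ph = vector [vector [- sin th, cos th, 0],
                        vector [- cos th * cos ph, - sin th * cos ph, sin ph]]"

definition is_polyhedron :: "(real^3) set \<Rightarrow> bool" where
  "is_polyhedron S \<longleftrightarrow> finite S \<and> aff_dim S = 3 \<and>
     (\<forall>p\<in>S. p \<notin> convex hull (S - {p}))"

definition has_radius_one :: "(real^3) set \<Rightarrow> bool" where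
  "has_radius_one S \<longleftrightarrow> (\<forall>p\<in>S. norm p \<le> 1) \<and> (\<exists>p\<in>S. norm p = 1)"

definition congruent_triples ::
  "real^3 \<Rightarrow> real^3 \<Rightarrow> real^3 \<Rightarrow> real^3 \<Rightarrow> real^3 \<Rightarrow> real^3 \<Rightarrow> bool" where
  "congruent_triples P1 P2 P3 Q1 Q2 Q3 \<longleftrightarrow>
     (\<exists>L::real^3^3. orthogonal_matrix L \<and>
        P1 = L *v Q1 \<and> P2 = L *v Q2 \<and> P3 = L *v Q3)"

definition eps_spanning ::
  "real \<Rightarrow> real \<Rightarrow> real \<Rightarrow> real^3 \<Rightarrow> real^3 \<Rightarrow> real^3 \<Rightarrow> bool" where
  "eps_spanning th ph \<epsilon> P1 P2 P3 \<longleftrightarrow>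
     norm P1 \<le> 1 \<and> norm P2 \<le> 1 \<and> norm P3 \<le> 1 \<and>
     (let M = Mmat th ph; c = 2 * \<epsilon> * (sqrt 2 + \<epsilon>) in
       inner (rotR (pi/2) *v (M *v P1)) (M *v P2) > c \<and>
       inner (rotR (pi/2) *v (M *v P2)) (M *v P3) > c \<and>
       inner (rotR (pi/2) *v (M *v P3)) (M *v P1) > c)"

end

theory Submission
  imports Defs
begin
lemma Mc1: "(Mmat t f *v p)$1 = - sin t * p$1 + cos t * p$2"
  by (simp add: Mmat_def matrix_vector_mult_def sum_3 vector_2 vector_3)
lemma Mc2: "(Mmat t f *v p)$2 = - cos t * cos f * p$1 - sin t * cos f * p$2 + sin f * p$3"
  by (simp add: Mmat_def matrix_vector_mult_def sum_3 vector_2 vector_3)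
lemma inner2: "inner (x::real^2) y = x$1*y$1 + x$2*y$2"
  by (simp add: inner_vec_def sum_2)
lemma inner3: "inner (x::real^3) y = x$1*y$1 + x$2*y$2 + x$3*y$3"
  by (simp add: inner_vec_def sum_3)
lemma norm2sq: "norm (x::real^2)^2 = x$1^2 + x$2^2"
  unfolding power2_norm_eq_inner inner2 by (simp add: power2_eq_square)
lemma norm3sq: "norm (x::real^3)^2 = x$1^2 + x$2^2 + x$3^2"
  unfolding power2_norm_eq_inner inner3 by (simp add: power2_eq_square)

lemma sos: fixes a b C S c s p1 p2 p3 :: real
  assumes "C^2 + S^2 = 1" "c^2+s^2 = 1"
  shows "(a^2+b^2)*(p1^2+p2^2+p3^2) - ((-a*(C*p1+S*p2))^2 + (-a*c*(-S*p1+C*p2) + b * s*(C*p1+S*p2) + b*c*p3)^2)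
   = (a*c*(s * (C*p1+S*p2)+c*p3) - a * s * (c*(C*p1+S*p2)-s * p3) + b*(-S*p1+C*p2))^2 + (a * s * (-S*p1+C*p2) + b*(c*(C*p1+S*p2)-s * p3))^2"
  using assms by algebra

lemma cs2: "(x1*y1 + x2*y2)^2 \<le> (x1^2+x2^2)*(y1^2+y2^2::real)"
proof -
  have "(x1^2+x2^2)*(y1^2+y2^2) - (x1*y1 + x2*y2)^2 = (x1*y2 - x2*y1)^2" by algebra
  then show ?thesis by (smt (verit) zero_le_power2)
qed

lemma cs3: "(x1*y1 + x2*y2 + x3*y3)^2 \<le> (x1^2+x2^2+x3^2)*(y1^2+y2^2+y3^2::real)"
proof -
  have "(x1^2+x2^2+x3^2)*(y1^2+y2^2+y3^2) - (x1*y1 + x2*y2 + x3*y3)^2 = (x1*y2 - x2*y1)^2 + (x1*y3 - x3*y1)^2 + (x2*y3 - x3*y2)^2" by algebra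
  then show ?thesis by (smt (verit) zero_le_power2)
qed

lemma M_lip: "norm (Mmat t f *v p - Mmat t' f' *v p)^2 \<le> ((t-t')^2 + (f-f')^2) * norm p ^2"
proof -
  define d where "d = Mmat t f *v p - Mmat t' f' *v p"
  define a where "a = t - t'"
  define b where "b = f - f'"
  define h where "h s = d$1 * (- sin (t' + s*a) * p$1 + cos (t'+s*a) * p$2) + d$2 * (- cos (t'+s*a) * cos (f'+s*b) * p$1 - sin (t'+s*a) * cos(f'+s*b) * p$2 + sin (f'+s*b) * p$3)" for s
  define D1 where "D1 s = -a*(cos (t'+s*a) * p$1 + sin (t'+s*a) * p$2)" for s
  define D2 where "D2 s = -a*cos (f'+s*b)*(- sin (t'+s*a) * p$1 + cos (t'+s*a) * p$2) + b * sin (f'+s*b) * (cos (t'+s*a) * p$1 + sin (t'+s*a) * p$2) + b * cos (f'+s*b) * p$3" for s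
  have der: "(h has_real_derivative (d$1 * D1 s + d$2 * D2 s)) (at s)" for s
    unfolding h_def D1_def D2_def
    by (rule derivative_eq_intros refl | simp)+ (simp add: algebra_simps)
  obtain z where z: "h 1 - h 0 = (1 - 0) * (d$1 * D1 z + d$2 * D2 z)"
    using MVT2[of 0 1 h "\<lambda>s. d$1 * D1 s + d$2 * D2 s"] der by auto
  have "h 1 - h 0 = d$1^2 + d$2^2"
    unfolding h_def a_def b_def by (simp add: d_def Mc1 Mc2 power2_eq_square algebra_simps)
  hence e: "norm d ^2 = d$1 * D1 z + d$2 * D2 z" using z by (simp add: norm2sq)
  have "(norm d^2)^2 = (d$1 * D1 z + d$2 * D2 z)^2" using e by simp
  also have "\<dots> \<le> (d$1^2 + d$2^2) * (D1 z^2 + D2 z^2)" by (rule cs2)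
  also have "\<dots> = norm d^2 * (D1 z^2 + D2 z^2)" by (simp add: norm2sq)
  also have "D1 z^2 + D2 z^2 \<le> (a^2+b^2) * norm p^2"
  proof -
    have "(a^2+b^2) * norm p^2 - (D1 z^2 + D2 z^2) \<ge> 0"
      unfolding norm3sq D1_def D2_def
      by (subst sos) (simp_all add: sin_squared_eq)
    thus ?thesis by simp
  qed
  hence "norm d^2 * (D1 z^2 + D2 z^2) \<le> norm d^2 * ((a^2+b^2) * norm p^2)"
    by (simp add: mult_left_mono)
  finally have "(norm d^2)^2 \<le> norm d^2 * ((a^2+b^2) * norm p^2)" .
  hence "norm d^2 \<le> (a^2+b^2) * norm p^2"
    by (cases "norm d = 0") (auto simp: power2_eq_square)
  thus ?thesis unfolding d_def a_def b_def .
qed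
lemma Rc1: "(rotR a *v v)$1 = cos a * v$1 - sin a * v$2"
  by (simp add: rotR_def matrix_vector_mult_def sum_2 vector_2)
lemma Rc2: "(rotR a *v v)$2 = sin a * v$1 + cos a * v$2"
  by (simp add: rotR_def matrix_vector_mult_def sum_2 vector_2)
lemma Xc: "Xvec t f $1 = cos t * sin f" "Xvec t f $2 = sin t * sin f" "Xvec t f $3 = cos f"
  by (simp_all add: Xvec_def vector_3)

lemma X_norm: "norm (Xvec t f) = 1"
proof -
  have "norm (Xvec t f)^2 = 1"
    unfolding norm3sq Xc
    using sin_cos_squared_add[of t] sin_cos_squared_add[of f] by algebra
  thus ?thesis using norm_ge_zero[of "Xvec t f"] by (auto simp add: power2_eq_1_iff)
qed

lemma M_norm: "norm (Mmat t f *v p)^2 = norm p^2 - (inner (Xvec t f) p)^2"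
  unfolding norm2sq norm3sq Mc1 Mc2 inner3 Xc
  using sin_cos_squared_add[of t] sin_cos_squared_add[of f] by algebra

lemma M_norm_le: "norm (Mmat t f *v p) \<le> norm p"
proof -
  have "norm (Mmat t f *v p)^2 \<le> norm p^2" using M_norm[of t f p] by simp
  thus ?thesis using power2_le_imp_le by fastforce
qed

lemma X_lip: "norm (Xvec t f - Xvec t' f')^2 \<le> (t-t')^2 + (f-f')^2"
proof -
  define d where "d = Xvec t f - Xvec t' f'"
  define a where "a = t - t'"
  define b where "b = f - f'"
  define h where "h s = d$1 * (cos (t'+s*a) * sin (f'+s*b)) + d$2 * (sin (t'+s*a) * sin (f'+s*b)) + d$3 * cos (f'+s*b)" for s
  define D1 where "D1 s = - a * sin (t'+s*a) * sin (f'+s*b) + b * cos (t'+s*a) * cos (f'+s*b)" for s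
  define D2 where "D2 s = a * cos (t'+s*a) * sin (f'+s*b) + b * sin (t'+s*a) * cos (f'+s*b)" for s
  define D3 where "D3 s = - b * sin (f'+s*b)" for s
  have der: "(h has_real_derivative (d$1 * D1 s + d$2 * D2 s + d$3 * D3 s)) (at s)" for s
    unfolding h_def D1_def D2_def D3_def
    by (rule derivative_eq_intros refl | simp)+ (simp add: algebra_simps)
  obtain z where z: "h 1 - h 0 = (1 - 0) * (d$1 * D1 z + d$2 * D2 z + d$3 * D3 z)"
    using MVT2[of 0 1 h "\<lambda>s. d$1 * D1 s + d$2 * D2 s + d$3 * D3 s"] der by auto
  have "h 1 - h 0 = d$1^2 + d$2^2 + d$3^2"
    unfolding h_def a_def b_def by (simp add: d_def Xc power2_eq_square algebra_simps)
  hence e: "norm d ^2 = d$1 * D1 z + d$2 * D2 z + d$3 * D3 z" using z by (simp add: norm3sq)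
  have "(norm d^2)^2 = (d$1 * D1 z + d$2 * D2 z + d$3 * D3 z)^2" using e by simp
  also have "\<dots> \<le> (d$1^2 + d$2^2 + d$3^2) * (D1 z^2 + D2 z^2 + D3 z^2)" by (rule cs3)
  also have "\<dots> = norm d^2 * (D1 z^2 + D2 z^2 + D3 z^2)" by (simp add: norm3sq)
  also have "D1 z^2 + D2 z^2 + D3 z^2 \<le> (a^2+b^2)"
  proof -
    have "(a^2+b^2) - (D1 z^2 + D2 z^2 + D3 z^2) = (a * cos (f'+z*b))^2"
      unfolding D1_def D2_def D3_def
      using sin_cos_squared_add[of "t'+z*a"] sin_cos_squared_add[of "f'+z*b"] by algebra
    thus ?thesis by (smt (verit) zero_le_power2)
  qed
  hence "norm d^2 * (D1 z^2 + D2 z^2 + D3 z^2) \<le> norm d^2 * (a^2+b^2)"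
    by (simp add: mult_left_mono)
  finally have "(norm d^2)^2 \<le> norm d^2 * (a^2+b^2)" .
  hence "norm d^2 \<le> (a^2+b^2)"
    by (cases "norm d = 0") (auto simp: power2_eq_square)
  thus ?thesis unfolding d_def a_def b_def .
qed

lemma sqrt2_bound:
  assumes "(x::real)^2 \<le> (t-t')^2 + (f-f')^2 * 1" "\<bar>t-t'\<bar> \<le> e" "\<bar>f-f'\<bar> \<le> e" "x \<ge> 0"
  shows "x \<le> sqrt 2 * e"
proof -
  have "(t-t')^2 \<le> e^2" "(f-f')^2 \<le> e^2" using assms by (simp_all add: abs_le_square_iff[symmetric])
  hence "x^2 \<le> (sqrt 2 * e)^2" using assms by (simp add: power_mult_distrib)
  moreover have "e \<ge> 0" using assms by linarith
  ultimately show ?thesis using power2_le_imp_le by (metis mult_nonneg_nonneg real_sqrt_ge_zero zero_le_numeral)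
qed

lemma X_diff: "\<bar>t-t'\<bar> \<le> e \<Longrightarrow> \<bar>f-f'\<bar> \<le> e \<Longrightarrow> norm (Xvec t f - Xvec t' f') \<le> sqrt 2 * e"
  by (rule sqrt2_bound[of _ t t' f f']) (use X_lip[of t f t' f'] in auto)

lemma M_diff: "\<bar>t-t'\<bar> \<le> e \<Longrightarrow> \<bar>f-f'\<bar> \<le> e \<Longrightarrow> norm (Mmat t f *v p - Mmat t' f' *v p) \<le> sqrt 2 * e * norm p"
proof -
  assume a: "\<bar>t-t'\<bar> \<le> e" "\<bar>f-f'\<bar> \<le> e"
  have "(t-t')^2 \<le> e^2" "(f-f')^2 \<le> e^2" using a by (simp_all add: abs_le_square_iff[symmetric])
  hence "((t-t')^2 + (f-f')^2) * norm p^2 \<le> (2*e^2) * norm p^2" by (intro mult_right_mono) auto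
  hence "norm (Mmat t f *v p - Mmat t' f' *v p)^2 \<le> (sqrt 2 * e * norm p)^2"
    using M_lip[of t f p t' f'] by (simp add: power_mult_distrib)
  moreover have "e \<ge> 0" using a by linarith
  ultimately show ?thesis using power2_le_imp_le by (metis mult_nonneg_nonneg norm_ge_zero real_sqrt_ge_zero zero_le_numeral)
qed

lemma R_norm: "norm (rotR a *v v) = norm v"
proof -
  have "norm (rotR a *v v)^2 = norm v^2"
    unfolding norm2sq Rc1 Rc2 using sin_cos_squared_add[of a] by algebra
  thus ?thesis by (simp add: power2_eq_iff_nonneg)
qed

lemma one_minus_cos: "1 - cos (x::real) \<le> x^2/2"
proof -
  have "cos x = cos (2*(x/2))" by simp
  also have "\<dots> = 1 - 2 * sin (x/2)^2" by (rule cos_double_sin)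
  finally have "1 - cos x = 2 * sin (x/2)^2" by simp
  also have "sin (x/2)^2 \<le> (x/2)^2" using abs_sin_x_le_abs_x[of "x/2"] by (simp only: abs_le_square_iff[symmetric])
  hence "2 * sin (x/2)^2 \<le> x^2/2" by (simp add: power_divide)
  finally show ?thesis .
qed

lemma R_diff: "norm (rotR a *v v - rotR a' *v v) \<le> \<bar>a - a'\<bar> * norm v"
proof -
  have "norm (rotR a *v v - rotR a' *v v)^2 = (2 - 2 * cos (a - a')) * norm v^2"
    unfolding norm2sq vector_minus_component Rc1 Rc2 cos_diff
    using sin_cos_squared_add[of a] sin_cos_squared_add[of a'] by algebra
  also have "\<dots> \<le> (\<bar>a - a'\<bar> * norm v)^2"
    using one_minus_cos[of "a-a'"] by (simp add: power_mult_distrib mult_right_mono)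
  finally show ?thesis using power2_le_imp_le by (metis abs_ge_zero mult_nonneg_nonneg norm_ge_zero)
qed

definition det2 :: "real^2 \<Rightarrow> real^2 \<Rightarrow> real" where "det2 x y = x$1*y$2 - x$2*y$1"

lemma J_det: "inner (rotR (pi/2) *v x) y = det2 x y"
  unfolding inner2 Rc1 Rc2 det2_def by (simp add: algebra_simps)

lemma det2_bound: "\<bar>det2 x y\<bar> \<le> norm x * norm y"
proof -
  have "(det2 x y)^2 \<le> (norm x * norm y)^2"
  proof -
    have "(norm x * norm y)^2 - (det2 x y)^2 = (x$1*y$1 + x$2*y$2)^2"
      unfolding power_mult_distrib norm2sq det2_def by algebra
    thus ?thesis by (smt (verit) zero_le_power2)
  qed
  thus ?thesis by (simp add: abs_le_square_iff[symmetric])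
qed

lemma det2_diff: "det2 x y - det2 x' y' = det2 (x - x') y + det2 x' (y - y')"
  unfolding det2_def by (simp add: algebra_simps)

lemma det2_identity: "det2 v2 v3 *\<^sub>R v1 + det2 v3 v1 *\<^sub>R v2 + det2 v1 v2 *\<^sub>R v3 = (0::real^2)"
  unfolding det2_def by (simp add: vec_eq_iff forall_2 algebra_simps)

lemma key_lemma:
  fixes Q :: "nat \<Rightarrow> real^3" and X Y Z :: "real^3"
  assumes nX: "norm X = 1" and nY: "norm Y = 1"
    and a: "a1 > 0" "a2 > 0" "a3 > 0"
    and Z: "Z = a1 *\<^sub>R Q 1 + a2 *\<^sub>R Q 2 + a3 *\<^sub>R Q 3"
    and nZ: "norm Z ^2 = (inner X Z)^2"
    and sP: "\<forall>i\<in>{1,2,3}. sP * inner Y (Q i) > 0" "sP = 1 \<or> sP = -1"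
    and sQ: "\<forall>i\<in>{1,2,3}. sQ * inner X (Q i) > 0" "sQ = 1 \<or> sQ = -1"
  shows "\<exists>i\<in>{1,2,3::nat}. \<bar>inner Y (Q i)\<bar> \<le> \<bar>inner X (Q i)\<bar>"
proof (rule ccontr)
  assume "\<not> ?thesis"
  hence lt: "\<bar>inner X (Q i)\<bar> < \<bar>inner Y (Q i)\<bar>" if "i \<in> {1,2,3}" for i using that by force
  have aY: "\<bar>inner Y (Q i)\<bar> = sP * inner Y (Q i)" if "i \<in> {1,2,3}" for i
    using sP(1)[rule_format, OF that] sP(2) by (elim disjE) auto
  have aX: "\<bar>inner X (Q i)\<bar> = sQ * inner X (Q i)" if "i \<in> {1,2,3}" for i
    using sQ(1)[rule_format, OF that] sQ(2) by (elim disjE) auto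
  have eY: "sP * inner Y Z = a1 * \<bar>inner Y (Q 1)\<bar> + a2 * \<bar>inner Y (Q 2)\<bar> + a3 * \<bar>inner Y (Q 3)\<bar>"
    unfolding Z by (simp add: aY inner_add_right algebra_simps)
  have eX: "sQ * inner X Z = a1 * \<bar>inner X (Q 1)\<bar> + a2 * \<bar>inner X (Q 2)\<bar> + a3 * \<bar>inner X (Q 3)\<bar>"
    unfolding Z by (simp add: aX inner_add_right algebra_simps)
  have "a1 * \<bar>inner X (Q 1)\<bar> < a1 * \<bar>inner Y (Q 1)\<bar>" using lt[of 1] a by simp
  moreover have "a2 * \<bar>inner X (Q 2)\<bar> < a2 * \<bar>inner Y (Q 2)\<bar>" using lt[of 2] a by simp
  moreover have "a3 * \<bar>inner X (Q 3)\<bar> < a3 * \<bar>inner Y (Q 3)\<bar>" using lt[of 3] a by simp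
  ultimately have 1: "sQ * inner X Z < sP * inner Y Z" using eX eY by linarith
  have "sqrt ((inner X Z)^2) = sqrt (norm Z^2)" using nZ by simp
  hence nz: "\<bar>inner X Z\<bar> = norm Z" by simp
  have "sQ * inner X Z \<ge> 0" unfolding eX using a by simp
  moreover have "\<bar>sQ * inner X Z\<bar> = \<bar>inner X Z\<bar>" using sQ(2) by (elim disjE) auto
  ultimately have 2: "sQ * inner X Z \<ge> norm Z" using nz by linarith
  have "\<bar>inner Y Z\<bar> \<le> norm Z" using Cauchy_Schwarz_ineq2[of Y Z] nY by simp
  moreover have "\<bar>sP * inner Y Z\<bar> = \<bar>inner Y Z\<bar>" using sP(2) by (elim disjE) auto
  ultimately have 3: "sP * inner Y Z \<le> norm Z" using abs_ge_self[of "sP * inner Y Z"] by linarith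
  show False using 1 2 3 by linarith
qed

lemma cone_hull:
  fixes v :: "real^2" and T :: "(real^2) set"
  assumes k: "\<kappa> \<ge> 0" and T: "\<forall>u\<in>T. inner v (v - u) \<ge> \<kappa> * norm v * norm (v - u)"
  shows "\<forall>u \<in> convex hull T. inner v (v - u) \<ge> \<kappa> * norm v * norm (v - u)"
proof -
  let ?C = "{u. inner v (v - u) \<ge> \<kappa> * norm v * norm (v - u)}"
  have "convex ?C"
    unfolding convex_def
  proof (intro ballI allI impI, simp only: mem_Collect_eq)
    fix x y :: "real^2" and s t :: real
    assume x: "inner v (v - x) \<ge> \<kappa> * norm v * norm (v - x)" and y: "inner v (v - y) \<ge> \<kappa> * norm v * norm (v - y)"
      and st: "0 \<le> s" "0 \<le> t" "s + t = 1"
    have e: "v - (s *\<^sub>R x + t *\<^sub>R y) = s *\<^sub>R (v - x) + t *\<^sub>R (v - y)"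
      using st by (simp add: algebra_simps) (metis scaleR_add_left scaleR_one)
    have "norm (v - (s *\<^sub>R x + t *\<^sub>R y)) \<le> s * norm (v - x) + t * norm (v - y)"
      unfolding e using norm_triangle_ineq[of "s *\<^sub>R (v - x)" "t *\<^sub>R (v - y)"] st by simp
    hence "\<kappa> * norm v * norm (v - (s *\<^sub>R x + t *\<^sub>R y)) \<le> \<kappa> * norm v * (s * norm (v - x) + t * norm (v - y))"
      using k by (simp add: mult_left_mono)
    also have "\<dots> = s * (\<kappa> * norm v * norm (v - x)) + t * (\<kappa> * norm v * norm (v - y))" by (simp add: algebra_simps)
    also have "\<dots> \<le> s * inner v (v - x) + t * inner v (v - y)"
      using x y st by (simp add: add_mono mult_left_mono)
    also have "\<dots> = inner v (v - (s *\<^sub>R x + t *\<^sub>R y))" unfolding e by (simp add: inner_add_right)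
    finally show "\<kappa> * norm v * norm (v - (s *\<^sub>R x + t *\<^sub>R y)) \<le> inner v (v - (s *\<^sub>R x + t *\<^sub>R y))" .
  qed
  moreover have "T \<subseteq> ?C" using T by auto
  ultimately have "convex hull T \<subseteq> ?C" by (rule hull_minimal[rotated])
  thus ?thesis by auto
qed

lemma not_interior:
  fixes v :: "real^2"
  assumes "v \<noteq> 0" "\<forall>u\<in>K. inner v (v - u) \<ge> 0"
  shows "v \<notin> interior K"
proof
  assume "v \<in> interior K"
  then obtain e where e: "e > 0" "ball v e \<subseteq> K" using mem_interior by blast
  define u where "u = v + (e/2/norm v) *\<^sub>R v"
  have "dist v u = e/2" using assms(1) e(1) by (simp add: u_def dist_norm)
  hence "u \<in> K" using e by auto
  hence "inner v (v - u) \<ge> 0" using assms by auto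
  moreover have "inner v (v - u) = - (e/2/norm v) * norm v^2"
    by (simp add: u_def inner_diff_right power2_norm_eq_inner)
  moreover have "(e/2/norm v) * norm v^2 > 0" using assms(1) e(1) by simp
  ultimately show False by linarith
qed

theorem theorem5p16:
  fixes S :: "(real^3) set"
    and P Q :: "nat \<Rightarrow> real^3"
    and \<epsilon> th1 ph1 th2 ph2 \<alpha> :: real
  assumes poly: "is_polyhedron S" and rad: "has_radius_one S"
    and PQin: "\<forall>i\<in>{1,2,3}. P i \<in> S \<and> Q i \<in> S"
    and cong: "congruent_triples (P 1) (P 2) (P 3) (Q 1) (Q 2) (Q 3)"
    and eps: "\<epsilon> > 0"
    and A: "\<exists>\<sigma>P \<sigma>Q :: nat. \<sigma>P \<in> {0,1} \<and> \<sigma>Q \<in> {0,1} \<and>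
              (\<forall>i\<in>{1,2,3}. (-1)^\<sigma>P * inner (Xvec th1 ph1) (P i) > sqrt 2 * \<epsilon> \<and>
                             (-1)^\<sigma>Q * inner (Xvec th2 ph2) (Q i) > sqrt 2 * \<epsilon>)"
    and Sp: "eps_spanning th1 ph1 \<epsilon> (P 1) (P 2) (P 3)"
    and Sq: "eps_spanning th2 ph2 \<epsilon> (Q 1) (Q 2) (Q 3)"
    and B: "\<exists>r \<delta> :: real. r > 0 \<and>
              Min ((\<lambda>i. norm (Mmat th2 ph2 *v Q i)) ` {1,2,3}) > r + sqrt 2 * \<epsilon> \<and>
              \<delta> \<ge> Max ((\<lambda>i. norm (rotR \<alpha> *v (Mmat th1 ph1 *v P i) - Mmat th2 ph2 *v Q i) / 2) ` {1,2,3}) \<and>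
              (\<forall>i\<in>{1,2,3}. \<forall>q\<in>S - {Q i}.
                 (inner (Mmat th2 ph2 *v Q i) (Mmat th2 ph2 *v (Q i - q))
                    - 2 * \<epsilon> * norm (Q i - q) * (sqrt 2 + \<epsilon>))
                 / ((norm (Mmat th2 ph2 *v Q i) + sqrt 2 * \<epsilon>)
                    * (norm (Mmat th2 ph2 *v (Q i - q)) + 2 * sqrt 2 * \<epsilon>))
                 > (sqrt 5 * \<epsilon> + \<delta>) / r)"
  shows "\<not> (\<exists>t1 f1 t2 f2 a :: real.
            \<bar>t1 - th1\<bar> \<le> \<epsilon> \<and> \<bar>f1 - ph1\<bar> \<le> \<epsilon> \<and>
            \<bar>t2 - th2\<bar> \<le> \<epsilon> \<and> \<bar>f2 - ph2\<bar> \<le> \<epsilon> \<and> \<bar>a - \<alpha>\<bar> \<le> \<epsilon> \<and>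
            (\<lambda>p. rotR a *v (Mmat t1 f1 *v p)) ` S
              \<subseteq> interior (convex hull ((\<lambda>p. Mmat t2 f2 *v p) ` S)))"
proof
  assume "\<exists>t1 f1 t2 f2 a :: real.
            \<bar>t1 - th1\<bar> \<le> \<epsilon> \<and> \<bar>f1 - ph1\<bar> \<le> \<epsilon> \<and>
            \<bar>t2 - th2\<bar> \<le> \<epsilon> \<and> \<bar>f2 - ph2\<bar> \<le> \<epsilon> \<and> \<bar>a - \<alpha>\<bar> \<le> \<epsilon> \<and>
            (\<lambda>p. rotR a *v (Mmat t1 f1 *v p)) ` S
              \<subseteq> interior (convex hull ((\<lambda>p. Mmat t2 f2 *v p) ` S))"
  then obtain t1 f1 t2 f2 a where bt1: "\<bar>t1 - th1\<bar> \<le> \<epsilon>" and bf1: "\<bar>f1 - ph1\<bar> \<le> \<epsilon>"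
    and bt2: "\<bar>t2 - th2\<bar> \<le> \<epsilon>" and bf2: "\<bar>f2 - ph2\<bar> \<le> \<epsilon>" and ba: "\<bar>a - \<alpha>\<bar> \<le> \<epsilon>"
    and H: "(\<lambda>p. rotR a *v (Mmat t1 f1 *v p)) ` S
              \<subseteq> interior (convex hull ((\<lambda>p. Mmat t2 f2 *v p) ` S))" by blast
  define M1 where "M1 = Mmat t1 f1"
  define M2 where "M2 = Mmat t2 f2"
  define Mb1 where "Mb1 = Mmat th1 ph1"
  define Mb2 where "Mb2 = Mmat th2 ph2"
  define X1 where "X1 = Xvec t1 f1"
  define X2 where "X2 = Xvec t2 f2"
  define R where "R = rotR a"
  define Rb where "Rb = rotR \<alpha>"
  have bt1': "\<bar>th1 - t1\<bar> \<le> \<epsilon>" "\<bar>ph1 - f1\<bar> \<le> \<epsilon>" "\<bar>th2 - t2\<bar> \<le> \<epsilon>" "\<bar>ph2 - f2\<bar> \<le> \<epsilon>"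
    using bt1 bf1 bt2 bf2 by linarith+
  have s2: "sqrt 2 * \<epsilon> > 0" using eps by simp
  have sc: "sqrt 2 * \<epsilon> * n \<le> sqrt 2 * \<epsilon>" if "n \<le> 1" for n
    using s2 that by (simp add: mult_left_le)
  have nS: "\<forall>p\<in>S. norm p \<le> 1" using rad by (simp add: has_radius_one_def)
  have inS: "P i \<in> S" "Q i \<in> S" if "i \<in> {1,2,3}" for i using PQin that by auto
  have nP: "norm (P i) \<le> 1" and nQ: "norm (Q i) \<le> 1" if "i \<in> {1,2,3}" for i
    using nS inS[OF that] by auto
  have dM2: "norm (M2 *v p - Mb2 *v p) \<le> sqrt 2 * \<epsilon> * norm p" for p
    unfolding M2_def Mb2_def using M_diff[OF bt2 bf2] .
  have dM1: "norm (Mb1 *v p - M1 *v p) \<le> sqrt 2 * \<epsilon> * norm p" for p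
    unfolding M1_def Mb1_def using M_diff[OF bt1'(1,2)] .
  obtain L :: "real^3^3" where L: "orthogonal_matrix L" "P 1 = L *v Q 1" "P 2 = L *v Q 2" "P 3 = L *v Q 3"
    using cong unfolding congruent_triples_def by blast
  have PL: "P i = L *v Q i" if "i \<in> {1,2,3}" for i using L that by auto
  have LL: "transpose L ** L = mat 1" "L ** transpose L = mat 1" using L(1) by (auto simp: orthogonal_matrix_def)
  define Y where "Y = transpose L *v X1"
  have innY: "inner X1 (L *v x) = inner Y x" for x
    unfolding Y_def by (simp add: dot_lmul_matrix[symmetric])
  have innL: "inner (L *v x) (L *v y) = inner x y" for x y
  proof -
    have "inner (L *v x) (L *v y) = inner (transpose L *v (L *v x)) y"
      by (simp add: dot_lmul_matrix[symmetric])
    also have "\<dots> = inner x y" by (simp add: matrix_vector_mul_assoc LL)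
    finally show ?thesis .
  qed
  have nL: "norm (L *v x) = norm x" for x using innL[of x x] by (simp add: norm_eq_sqrt_inner)
  have nY: "norm Y = 1"
  proof -
    have "L *v Y = X1" unfolding Y_def by (simp only: matrix_vector_mul_assoc LL(2) matrix_vector_mul_lid)
    hence "norm Y = norm X1" using nL[of Y] by simp
    thus ?thesis by (simp add: X1_def X_norm)
  qed
  obtain \<sigma>P \<sigma>Q :: nat where sig: "\<sigma>P \<in> {0,1}" "\<sigma>Q \<in> {0,1}"
    and sigA: "\<forall>i\<in>{1,2,3}. (-1)^\<sigma>P * inner (Xvec th1 ph1) (P i) > sqrt 2 * \<epsilon> \<and>
                             (-1)^\<sigma>Q * inner (Xvec th2 ph2) (Q i) > sqrt 2 * \<epsilon>"
    using A by blast
  define sP :: real where "sP = (-1)^\<sigma>P"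
  define sQ :: real where "sQ = (-1)^\<sigma>Q"
  have sP1: "sP = 1 \<or> sP = -1" and sQ1: "sQ = 1 \<or> sQ = -1" using sig by (auto simp: sP_def sQ_def)
  have sign_pert: "s * inner X p > 0"
    if "s * inner Xb p > sqrt 2 * \<epsilon>" "s = 1 \<or> s = -1" "norm p \<le> 1" "norm (X - Xb) \<le> sqrt 2 * \<epsilon>" for s X Xb p
  proof -
    have "\<bar>inner (X - Xb) p\<bar> \<le> norm (X - Xb) * norm p" by (rule Cauchy_Schwarz_ineq2)
    also have "\<dots> \<le> sqrt 2 * \<epsilon> * 1" using that(3,4) s2 by (intro mult_mono) auto
    finally have "\<bar>inner X p - inner Xb p\<bar> \<le> sqrt 2 * \<epsilon>" by (simp add: inner_diff_left)
    thus ?thesis using that(1,2) by (elim disjE) auto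
  qed
  have sPpos: "\<forall>i\<in>{1,2,3}. sP * inner Y (Q i) > 0"
  proof
    fix i :: nat assume i: "i \<in> {1,2,3}"
    have "sP * inner X1 (P i) > 0"
      using sign_pert[of sP "Xvec th1 ph1" "P i" X1] conjunct1[OF sigA[rule_format, OF i]] sP1 nP[OF i] X_diff[OF bt1 bf1]
      by (simp add: sP_def X1_def)
    thus "sP * inner Y (Q i) > 0" using PL[OF i] innY by simp
  qed
  have sQpos: "\<forall>i\<in>{1,2,3}. sQ * inner X2 (Q i) > 0"
  proof
    fix i :: nat assume i: "i \<in> {1,2,3}"
    show "sQ * inner X2 (Q i) > 0"
      using sign_pert[of sQ "Xvec th2 ph2" "Q i" X2] conjunct2[OF sigA[rule_format, OF i]] sQ1 nQ[OF i] X_diff[OF bt2 bf2]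
      by (simp add: sQ_def X2_def)
  qed
  have span_pert: "det2 (M2 *v x) (M2 *v y) > 0"
    if "det2 (Mb2 *v x) (Mb2 *v y) > 2 * \<epsilon> * (sqrt 2 + \<epsilon>)" "norm x \<le> 1" "norm y \<le> 1" for x y
  proof -
    have e: "det2 (M2 *v x) (M2 *v y) - det2 (Mb2 *v x) (Mb2 *v y)
       = det2 (M2 *v x - Mb2 *v x) (M2 *v y) + det2 (Mb2 *v x) (M2 *v y - Mb2 *v y)" by (rule det2_diff)
    have "\<bar>det2 (M2 *v x - Mb2 *v x) (M2 *v y)\<bar> \<le> norm (M2 *v x - Mb2 *v x) * norm (M2 *v y)" by (rule det2_bound)
    also have "\<dots> \<le> (sqrt 2 * \<epsilon>) * 1"
      by (rule mult_mono) (use order_trans[OF dM2[of x] sc[OF that(2)]] order_trans[OF M_norm_le[of t2 f2 y] that(3)] s2 in \<open>auto simp: M2_def\<close>)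
    finally have 1: "\<bar>det2 (M2 *v x - Mb2 *v x) (M2 *v y)\<bar> \<le> sqrt 2 * \<epsilon>" by simp
    have "\<bar>det2 (Mb2 *v x) (M2 *v y - Mb2 *v y)\<bar> \<le> norm (Mb2 *v x) * norm (M2 *v y - Mb2 *v y)" by (rule det2_bound)
    also have "\<dots> \<le> 1 * (sqrt 2 * \<epsilon>)"
      by (rule mult_mono) (use order_trans[OF dM2[of y] sc[OF that(3)]] order_trans[OF M_norm_le[of th2 ph2 x] that(2)] s2 in \<open>auto simp: Mb2_def\<close>)
    finally have 2: "\<bar>det2 (Mb2 *v x) (M2 *v y - Mb2 *v y)\<bar> \<le> sqrt 2 * \<epsilon>" by simp
    have "2 * \<epsilon> * (sqrt 2 + \<epsilon>) \<ge> 2 * (sqrt 2 * \<epsilon>)" using eps by (simp add: algebra_simps)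
    thus ?thesis using e 1 2 that(1) by linarith
  qed
  define v where "v k = M2 *v Q k" for k
  have Sq': "det2 (Mb2 *v Q 1) (Mb2 *v Q 2) > 2 * \<epsilon> * (sqrt 2 + \<epsilon>)"
            "det2 (Mb2 *v Q 2) (Mb2 *v Q 3) > 2 * \<epsilon> * (sqrt 2 + \<epsilon>)"
            "det2 (Mb2 *v Q 3) (Mb2 *v Q 1) > 2 * \<epsilon> * (sqrt 2 + \<epsilon>)"
    using Sq unfolding eps_spanning_def Let_def J_det Mb2_def by auto
  have a1: "det2 (v 2) (v 3) > 0" unfolding v_def by (rule span_pert[OF Sq'(2) nQ nQ]) auto
  have a2: "det2 (v 3) (v 1) > 0" unfolding v_def by (rule span_pert[OF Sq'(3) nQ nQ]) auto
  have a3: "det2 (v 1) (v 2) > 0" unfolding v_def by (rule span_pert[OF Sq'(1) nQ nQ]) auto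
  define Z where "Z = det2 (v 2) (v 3) *\<^sub>R Q 1 + det2 (v 3) (v 1) *\<^sub>R Q 2 + det2 (v 1) (v 2) *\<^sub>R Q 3"
  have "M2 *v Z = det2 (v 2) (v 3) *\<^sub>R v 1 + det2 (v 3) (v 1) *\<^sub>R v 2 + det2 (v 1) (v 2) *\<^sub>R v 3"
    unfolding Z_def v_def by (simp add: matrix_vector_right_distrib matrix_vector_mult_scaleR)
  hence "M2 *v Z = 0" by (simp add: det2_identity)
  hence nZ: "norm Z ^2 = (inner X2 Z)^2" using M_norm[of t2 f2 Z] by (simp add: M2_def X2_def)
  obtain i :: nat where i: "i \<in> {1,2,3}" and iY: "\<bar>inner Y (Q i)\<bar> \<le> \<bar>inner X2 (Q i)\<bar>"
    using key_lemma[OF _ nY a1 a2 a3 Z_def nZ sPpos sP1 sQpos sQ1] X_norm by (auto simp: X2_def)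
  define w where "w = R *v (M1 *v P i)"
  define vb where "vb = Mb2 *v Q i"
  define wb where "wb = Rb *v (Mb1 *v P i)"
  have vw: "norm (v i) \<le> norm w"
  proof -
    have "norm w ^2 = norm (M1 *v P i)^2" unfolding w_def R_def by (simp add: R_norm)
    also have "\<dots> = norm (Q i)^2 - (inner Y (Q i))^2"
      unfolding M1_def M_norm using PL[OF i] nL innY by (simp add: X1_def)
    also have "\<dots> \<ge> norm (Q i)^2 - (inner X2 (Q i))^2" using iY by (simp add: abs_le_square_iff)
    also have "norm (Q i)^2 - (inner X2 (Q i))^2 = norm (v i)^2"
      unfolding v_def M2_def X2_def M_norm ..
    finally show ?thesis using power2_le_imp_le by fastforce
  qed
  obtain r \<delta> where r0: "r > 0"
    and hMin: "Min ((\<lambda>i. norm (Mmat th2 ph2 *v Q i)) ` {1,2,3}) > r + sqrt 2 * \<epsilon>"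
    and hMax: "\<delta> \<ge> Max ((\<lambda>i. norm (rotR \<alpha> *v (Mmat th1 ph1 *v P i) - Mmat th2 ph2 *v Q i) / 2) ` {1,2,3})"
    and hC: "\<forall>i\<in>{1,2,3}. \<forall>q\<in>S - {Q i}.
                 (inner (Mmat th2 ph2 *v Q i) (Mmat th2 ph2 *v (Q i - q))
                    - 2 * \<epsilon> * norm (Q i - q) * (sqrt 2 + \<epsilon>))
                 / ((norm (Mmat th2 ph2 *v Q i) + sqrt 2 * \<epsilon>)
                    * (norm (Mmat th2 ph2 *v (Q i - q)) + 2 * sqrt 2 * \<epsilon>))
                 > (sqrt 5 * \<epsilon> + \<delta>) / r"
    using B by blast
  have vb_gt: "norm vb > r + sqrt 2 * \<epsilon>"
    using hMin i by (auto simp add: Min_gr_iff vb_def Mb2_def)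
  have wbvb: "norm (wb - vb) / 2 \<le> \<delta>"
  proof -
    have "norm (wb - vb) / 2 \<le> Max ((\<lambda>i. norm (rotR \<alpha> *v (Mmat th1 ph1 *v P i) - Mmat th2 ph2 *v Q i) / 2) ` {1,2,3})"
      by (rule Max_ge) (use i in \<open>auto simp: wb_def vb_def Rb_def Mb1_def Mb2_def\<close>)
    thus ?thesis using hMax by linarith
  qed
  have d0: "\<delta> \<ge> 0" using wbvb by (smt (verit) norm_ge_zero divide_nonneg_pos)
  define \<kappa> where "\<kappa> = (sqrt 5 * \<epsilon> + \<delta>) / r"
  have k0: "\<kappa> > 0" unfolding \<kappa>_def using eps d0 r0 by (intro divide_pos_pos add_pos_nonneg) auto
  have vvb: "norm (v i - vb) \<le> sqrt 2 * \<epsilon>"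
    using order_trans[OF dM2[of "Q i"] sc[OF nQ[OF i]]] unfolding v_def vb_def .
  have vr: "norm (v i) > r" using vb_gt vvb norm_triangle_ineq2[of vb "v i"] norm_minus_commute[of vb "v i"] by linarith
  have v0: "v i \<noteq> 0" using vr r0 by auto
  have wwb: "norm (wb - w) \<le> \<epsilon> + sqrt 2 * \<epsilon>"
  proof -
    have e: "wb - w = (Rb *v (Mb1 *v P i) - R *v (Mb1 *v P i)) + R *v (Mb1 *v P i - M1 *v P i)"
      unfolding wb_def w_def by (simp add: matrix_vector_mult_diff_distrib)
    have "norm (Rb *v (Mb1 *v P i) - R *v (Mb1 *v P i)) \<le> \<bar>\<alpha> - a\<bar> * norm (Mb1 *v P i)"
      unfolding Rb_def R_def by (rule R_diff)
    also have "\<dots> \<le> \<epsilon> * 1"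
      using ba M_norm_le[of th1 ph1 "P i"] nP[OF i] eps by (intro mult_mono) (auto simp: Mb1_def)
    finally have 1: "norm (Rb *v (Mb1 *v P i) - R *v (Mb1 *v P i)) \<le> \<epsilon>" by simp
    have "norm (R *v (Mb1 *v P i - M1 *v P i)) = norm (Mb1 *v P i - M1 *v P i)" unfolding R_def by (rule R_norm)
    also have "\<dots> \<le> sqrt 2 * \<epsilon>" using order_trans[OF dM1[of "P i"] sc[OF nP[OF i]]] .
    finally have 2: "norm (R *v (Mb1 *v P i - M1 *v P i)) \<le> sqrt 2 * \<epsilon>" .
    show ?thesis unfolding e using norm_triangle_ineq[of "Rb *v (Mb1 *v P i) - R *v (Mb1 *v P i)" "R *v (Mb1 *v P i - M1 *v P i)"] 1 2 by linarith
  qed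
  have dist_vw: "norm (v i - w) \<le> (1 + 2 * sqrt 2) * \<epsilon> + 2 * \<delta>"
  proof -
    have "v i - w = (v i - vb) + (vb - wb) + (wb - w)" by simp
    hence "norm (v i - w) \<le> norm (v i - vb) + norm (vb - wb) + norm (wb - w)"
      by (metis norm_triangle_le norm_triangle_ineq add_mono order_refl)
    moreover have "norm (vb - wb) \<le> 2 * \<delta>" using wbvb norm_minus_commute[of vb wb] by simp
    ultimately show ?thesis using vvb wwb by (simp add: algebra_simps)
  qed
  have cone: "\<forall>u\<in>(\<lambda>p. M2 *v p) ` S. inner (v i) (v i - u) \<ge> \<kappa> * norm (v i) * norm (v i - u)"
  proof
    fix u assume "u \<in> (\<lambda>p. M2 *v p) ` S"
    then obtain q where q: "q \<in> S" "u = M2 *v q" by auto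
    show "inner (v i) (v i - u) \<ge> \<kappa> * norm (v i) * norm (v i - u)"
    proof (cases "q = Q i")
      case True thus ?thesis using q by (simp add: v_def)
    next
      case False
      define d where "d = Q i - q"
      have vu: "v i - u = M2 *v d" unfolding d_def v_def q(2) by (simp add: matrix_vector_mult_diff_distrib)
      have nd: "norm d \<le> 2" unfolding d_def using nQ[OF i] nS q(1) norm_triangle_ineq4[of "Q i" q] by force
      have hq: "(inner vb (Mb2 *v d) - 2 * \<epsilon> * norm d * (sqrt 2 + \<epsilon>))
                 / ((norm vb + sqrt 2 * \<epsilon>) * (norm (Mb2 *v d) + 2 * sqrt 2 * \<epsilon>)) > \<kappa>"
        using hC i q(1) False unfolding vb_def Mb2_def d_def \<kappa>_def by auto
      have Dpos: "(norm vb + sqrt 2 * \<epsilon>) * (norm (Mb2 *v d) + 2 * sqrt 2 * \<epsilon>) > 0"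
        using s2 norm_ge_zero[of vb] norm_ge_zero[of "Mb2 *v d"] by (intro mult_pos_pos) linarith+
      have hq2: "inner vb (Mb2 *v d) - 2 * \<epsilon> * norm d * (sqrt 2 + \<epsilon>)
                 > \<kappa> * ((norm vb + sqrt 2 * \<epsilon>) * (norm (Mb2 *v d) + 2 * sqrt 2 * \<epsilon>))"
        using hq Dpos by (simp add: pos_less_divide_eq)
      have num: "inner (v i) (M2 *v d) \<ge> inner vb (Mb2 *v d) - 2 * \<epsilon> * norm d * (sqrt 2 + \<epsilon>)"
      proof -
        have e: "inner (v i) (M2 *v d) - inner vb (Mb2 *v d) = inner (v i - vb) (M2 *v d) + inner vb (M2 *v d - Mb2 *v d)"
          by (simp add: inner_diff_left inner_diff_right)
        have "\<bar>inner (v i - vb) (M2 *v d)\<bar> \<le> norm (v i - vb) * norm (M2 *v d)" by (rule Cauchy_Schwarz_ineq2)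
        also have "\<dots> \<le> (sqrt 2 * \<epsilon>) * norm d"
          using vvb M_norm_le[of t2 f2 d] s2 by (intro mult_mono) (auto simp: M2_def)
        finally have 1: "\<bar>inner (v i - vb) (M2 *v d)\<bar> \<le> sqrt 2 * \<epsilon> * norm d" .
        have "\<bar>inner vb (M2 *v d - Mb2 *v d)\<bar> \<le> norm vb * norm (M2 *v d - Mb2 *v d)" by (rule Cauchy_Schwarz_ineq2)
        also have "\<dots> \<le> 1 * (sqrt 2 * \<epsilon> * norm d)"
          using dM2[of d] M_norm_le[of th2 ph2 "Q i"] nQ[OF i] s2 by (intro mult_mono) (auto simp: vb_def Mb2_def)
        finally have 2: "\<bar>inner vb (M2 *v d - Mb2 *v d)\<bar> \<le> sqrt 2 * \<epsilon> * norm d" by simp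
        have "2 * \<epsilon> * norm d * (sqrt 2 + \<epsilon>) \<ge> 2 * (sqrt 2 * \<epsilon> * norm d)"
          using eps by (simp add: algebra_simps)
        thus ?thesis using e 1 2 by linarith
      qed
      have den: "norm (v i) * norm (M2 *v d) \<le> (norm vb + sqrt 2 * \<epsilon>) * (norm (Mb2 *v d) + 2 * sqrt 2 * \<epsilon>)"
      proof (rule mult_mono)
        show "norm (v i) \<le> norm vb + sqrt 2 * \<epsilon>"
          using vvb norm_triangle_ineq2[of "v i" vb] by linarith
        have "norm (M2 *v d - Mb2 *v d) \<le> sqrt 2 * \<epsilon> * 2"
          using order_trans[OF dM2[of d] mult_left_mono[OF nd, of "sqrt 2 * \<epsilon>"]] s2 by simp
        thus "norm (M2 *v d) \<le> norm (Mb2 *v d) + 2 * sqrt 2 * \<epsilon>"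
          using norm_triangle_ineq2[of "M2 *v d" "Mb2 *v d"] by linarith
        show "norm vb + sqrt 2 * \<epsilon> \<ge> 0" using s2 by simp
      qed simp
      have "\<kappa> * (norm (v i) * norm (M2 *v d)) \<le> \<kappa> * ((norm vb + sqrt 2 * \<epsilon>) * (norm (Mb2 *v d) + 2 * sqrt 2 * \<epsilon>))"
        using den k0 by (simp add: mult_left_mono)
      thus ?thesis using num hq2 vu by (simp add: mult.assoc)
    qed
  qed
  have hull: "\<forall>u \<in> convex hull ((\<lambda>p. M2 *v p) ` S). inner (v i) (v i - u) \<ge> \<kappa> * norm (v i) * norm (v i - u)"
    by (rule cone_hull[OF _ cone]) (use k0 in simp)
  have "v i \<in> convex hull ((\<lambda>p. M2 *v p) ` S)"
    by (rule hull_inc) (use inS[OF i] in \<open>auto simp: v_def\<close>)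
  have vni: "v i \<notin> interior (convex hull ((\<lambda>p. M2 *v p) ` S))"
  proof (rule not_interior[OF v0], rule ballI)
    fix u assume "u \<in> convex hull ((\<lambda>p. M2 *v p) ` S)"
    hence "inner (v i) (v i - u) \<ge> \<kappa> * norm (v i) * norm (v i - u)" using hull by blast
    moreover have "\<kappa> * norm (v i) * norm (v i - u) \<ge> 0" using k0 by simp
    ultimately show "inner (v i) (v i - u) \<ge> 0" by linarith
  qed
  have wint: "w \<in> interior (convex hull ((\<lambda>p. M2 *v p) ` S))"
    using H inS[OF i] unfolding w_def R_def M1_def M2_def by auto
  hence "w \<in> convex hull ((\<lambda>p. M2 *v p) ` S)" using interior_subset by blast
  hence c1: "inner (v i) (v i - w) \<ge> \<kappa> * norm (v i) * norm (v i - w)" using hull by blast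
  have wv: "w \<noteq> v i" using wint vni by auto
  hence nvw: "norm (v i - w) > 0" by simp
  have c2: "2 * inner (v i) (v i - w) \<le> norm (v i - w)^2"
  proof -
    have "norm (v i - w)^2 = norm (v i)^2 - 2 * inner (v i) w + norm w^2"
      by (simp add: power2_norm_eq_inner inner_diff_left inner_diff_right inner_commute)
    moreover have "norm (v i)^2 \<le> norm w^2" using vw by (simp add: power_mono)
    moreover have "inner (v i) (v i - w) = norm (v i)^2 - inner (v i) w"
      by (simp add: power2_norm_eq_inner inner_diff_right)
    ultimately show ?thesis by linarith
  qed
  have "2 * (\<kappa> * norm (v i)) * norm (v i - w) \<le> norm (v i - w) * norm (v i - w)"
    using c1 c2 by (simp add: power2_eq_square algebra_simps)
  hence c3: "2 * (\<kappa> * norm (v i)) \<le> norm (v i - w)" using nvw by simp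
  have "sqrt 5 * \<epsilon> + \<delta> = \<kappa> * r" unfolding \<kappa>_def using r0 by simp
  hence "2 * (sqrt 5 * \<epsilon> + \<delta>) = 2 * (\<kappa> * r)" by simp
  also have "\<dots> < 2 * (\<kappa> * norm (v i))" using k0 vr by simp
  also have "\<dots> \<le> norm (v i - w)" by (rule c3)
  finally have c4: "2 * (sqrt 5 * \<epsilon> + \<delta>) < norm (v i - w)" .
  have "sqrt 2 \<le> 3/2"
    by (rule real_le_lsqrt) (auto simp: power2_eq_square)
  moreover have "2 \<le> sqrt 5"
    by (rule real_le_rsqrt) (auto simp: power2_eq_square)
  ultimately have "(1 + 2 * sqrt 2) * \<epsilon> \<le> 2 * sqrt 5 * \<epsilon>" using eps by (intro mult_right_mono) auto
  hence "(1 + 2 * sqrt 2) * \<epsilon> + 2 * \<delta> \<le> 2 * (sqrt 5 * \<epsilon> + \<delta>)" by (simp add: algebra_simps)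
  thus False using c4 dist_vw by linarith
qed

end
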